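(* Suppose $\underline{\mathcal Z}\subseteq\ell^1(\mathcal Z)$. Then a linear functional $H:\underline{\mathcal Z}\to\mathcal Y$ has the $1$-weighted FMP if and only if it has a (proper) convolution representation $\underline\kappa$ satisfying $\lim_{t\to-\infty}\|\kappa_t\|_{op}=0$.
   Context: Let $(\mathcal Z,\|\cdot\|)$ and $(\mathcal Y,\|\cdot\|_{\mathcal Y})$ be normed vector spaces over $\mathbb R$ and $\mathcal B=\{z\in\mathcal Z:\|z\|\le1\}$. Let $\mathbb Z_-=\{0,-1,-2,\dots\}$; elements of $\mathcal Z^{\mathbb Z_-}$ are sequences $\underline z=(z_t)_{t\le0}$. For $t\in\mathbb Z_-$, $\delta^t:\mathcal Z\to\mathcal Z^{\mathbb Z_-}$ maps $z$ to the sequence whose entry at time $t$ is $z$ and all other entries are $0$. Standing assumption: $\underline{\mathcal Z}\subseteq\mathcal Z^{\mathbb Z_-}$ is a set such that (a) $\underline{\mathcal Z}$ is convex and $\underline{\mathcal Z}=\{-\underline z:\underline z\in\underline{\mathcal Z}\}$; (b) $\delta^t(\mathcal B)\subseteq\underline{\mathcal Z}$ for all $t\in\mathbb Z_-$; (c) for every $\underline z\in\underline{\mathcal Z}$ and every $J\subseteq\mathbb Z_-$, the sequence $\sum_{t\in J}\delta^t(z_t)$ (equal to $z_t$ at times $t\in J$ and $0$ elsewhere) belongs to $\underline{\mathcal Z}$. A functional $H:\underline{\mathcal Z}\to\mathcal Y$ is linear if it is the restriction of a linear map defined on the linear span of $\underline{\mathcal Z}$. $L(\mathcal Z,\mathcal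 Y)$ is the space of continuous linear maps $\mathcal Z\to\mathcal Y$ with operator norm $\|\cdot\|_{op}$. $H$ has a (proper) convolution representation if there is $\underline\kappa\in L(\mathcal Z,\mathcal Y)^{\mathbb Z_-}$ with $H(\underline z)=\lim_{T\to-\infty}\sum_{t=T}^0\kappa_t(z_t)$ and $\sum_{t\le0}\|\kappa_t(z_t)\|_{\mathcal Y}<\infty$ for all $\underline z\in\underline{\mathcal Z}$. $\ell^1(\mathcal Z)$ is the set of $\underline z$ with $\|\underline z\|_1=\sum_{t\le0}\|z_t\|<\infty$. A weighting sequence is a monotone $\underline w\in(0,1]^{\mathbb Z_-}$ with $w_t\to0$ as $t\to-\infty$; $\|\underline z\|_{1,\underline w}=\sum_{t\le0}w_t\|z_t\|$. $H$ has the $1$-weighted FMP if $\underline{\mathcal Z}\subseteq\ell^1(\mathcal Z)$ and there exists a weighting sequence $\underline w$ such that $H$ is continuous for the topology induced by $\|\cdot\|_{1,\underline w}$. *)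

theory Defs
  imports "HOL-Analysis.Analysis"
begin

text \<open>Time index convention: a left-infinite sequence (z_t) for t in {0,-1,-2,...}
  is represented as a function nat => 'z, where the value at n :: nat is z_{-n}.\<close>

definition delta_seq :: "nat \<Rightarrow> 'z::real_normed_vector \<Rightarrow> (nat \<Rightarrow> 'z)" where
  "delta_seq t z = (\<lambda>n. if n = t then z else 0)"

definition standing_assumption :: "(nat \<Rightarrow> 'z::real_normed_vector) set \<Rightarrow> bool" where
  "standing_assumption Zs \<longleftrightarrow>
     (\<forall>x\<in>Zs. \<forall>y\<in>Zs. \<forall>u::real. 0 \<le> u \<and> u \<le> 1 \<longrightarrow> (\<lambda>n. u *\<^sub>R x n + (1 - u) *\<^sub>R y n) \<in> Zs)
   \<and> (\<forall>z\<in>Zs. (\<lambda>n. - z n) \<in> Zs)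
   \<and> (\<forall>t z. norm z \<le> 1 \<longrightarrow> delta_seq t z \<in> Zs)
   \<and> (\<forall>z\<in>Zs. \<forall>J::nat set. (\<lambda>n. if n \<in> J then z n else 0) \<in> Zs)"

inductive_set seq_span :: "(nat \<Rightarrow> 'z::real_vector) set \<Rightarrow> (nat \<Rightarrow> 'z) set"
  for Zs :: "(nat \<Rightarrow> 'z) set" where
  span_base: "z \<in> Zs \<Longrightarrow> z \<in> seq_span Zs"
| span_zero: "(\<lambda>n. 0) \<in> seq_span Zs"
| span_add: "x \<in> seq_span Zs \<Longrightarrow> y \<in> seq_span Zs \<Longrightarrow> (\<lambda>n. x n + y n) \<in> seq_span Zs"
| span_scale: "x \<in> seq_span Zs \<Longrightarrow> (\<lambda>n. c *\<^sub>R x n) \<in> seq_span Zs"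

definition linear_functional ::
  "(nat \<Rightarrow> 'z::real_vector) set \<Rightarrow> ((nat \<Rightarrow> 'z) \<Rightarrow> 'y::real_vector) \<Rightarrow> bool" where
  "linear_functional Zs H \<longleftrightarrow>
     (\<exists>L. (\<forall>x\<in>seq_span Zs. \<forall>y\<in>seq_span Zs. L (\<lambda>n. x n + y n) = L x + L y)
        \<and> (\<forall>c. \<forall>x\<in>seq_span Zs. L (\<lambda>n. c *\<^sub>R x n) = c *\<^sub>R L x)
        \<and> (\<forall>z\<in>Zs. H z = L z))"

definition in_ell1 :: "(nat \<Rightarrow> 'z::real_normed_vector) \<Rightarrow> bool" where
  "in_ell1 z \<longleftrightarrow> summable (\<lambda>n. norm (z n))"

definition convolution_rep ::
  "(nat \<Rightarrow> 'z::real_normed_vector) set \<Rightarrow> ((nat \<Rightarrow> 'z) \<Rightarrow> 'y::real_normed_vector)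
    \<Rightarrow> (nat \<Rightarrow> ('z \<Rightarrow>\<^sub>L 'y)) \<Rightarrow> bool" where
  "convolution_rep Zs H \<kappa> \<longleftrightarrow>
     (\<forall>z\<in>Zs. (\<lambda>N. \<Sum>n\<le>N. blinfun_apply (\<kappa> n) (z n)) \<longlonglongrightarrow> H z
            \<and> summable (\<lambda>n. norm (blinfun_apply (\<kappa> n) (z n))))"

definition weighting_seq :: "(nat \<Rightarrow> real) \<Rightarrow> bool" where
  "weighting_seq w \<longleftrightarrow> (mono w \<or> antimono w) \<and> (\<forall>n. 0 < w n \<and> w n \<le> 1) \<and> w \<longlonglongrightarrow> 0"

definition weighted_norm1 :: "(nat \<Rightarrow> real) \<Rightarrow> (nat \<Rightarrow> 'z::real_normed_vector) \<Rightarrow> real" where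
  "weighted_norm1 w z = (\<Sum>n. w n * norm (z n))"

definition FMP1 ::
  "(nat \<Rightarrow> 'z::real_normed_vector) set \<Rightarrow> ((nat \<Rightarrow> 'z) \<Rightarrow> 'y::real_normed_vector) \<Rightarrow> bool" where
  "FMP1 Zs H \<longleftrightarrow> (\<forall>z\<in>Zs. in_ell1 z) \<and>
     (\<exists>w. weighting_seq w \<and>
        (\<forall>z\<in>Zs. \<forall>e>0. \<exists>d>0. \<forall>z'\<in>Zs.
            weighted_norm1 w (\<lambda>n. z' n - z n) < d \<longrightarrow> norm (H z' - H z) < e))"

end

theory Submission
  imports Defs
begin

lemma homog_bound:
  fixes f :: "'a::real_normed_vector \<Rightarrow> 'b::real_normed_vector"
  assumes sc: "\<And>c x. f (c *\<^sub>R x) = c *\<^sub>R f x" and m: "0 < m"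
    and b: "\<And>y. norm y \<le> m \<Longrightarrow> norm (f y) \<le> e"
  shows "norm (f x) \<le> e / m * norm x"
proof (cases "x = 0")
  case True
  have "f 0 = 0" using sc[of 0 0] by simp
  then show ?thesis using True by simp
next
  case False
  define y where "y = (m / norm x) *\<^sub>R x"
  have ny: "norm y = m" using False m by (simp add: y_def)
  have "f y = (m / norm x) *\<^sub>R f x" by (simp add: y_def sc)
  then have "norm (f y) = m / norm x * norm (f x)" using m by simp
  with b[of y] ny have "m / norm x * norm (f x) \<le> e" by simp
  then have "m * norm (f x) \<le> e * norm x" using False by (simp add: field_simps)
  then show ?thesis using m by (simp add: field_simps)
qed

lemma conv_imp_FMP:
  fixes Zs :: "(nat \<Rightarrow> 'z::real_normed_vector) set"
    and H :: "(nat \<Rightarrow> 'z) \<Rightarrow> 'y::real_normed_vector"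
  assumes l1: "\<forall>z\<in>Zs. in_ell1 z" and cr: "convolution_rep Zs H \<kappa>"
    and k0: "(\<lambda>n. norm (\<kappa> n)) \<longlonglongrightarrow> 0"
  shows "FMP1 Zs H"
proof -
  define s where "s n = (SUP m\<in>{n..}. norm (\<kappa> m))" for n
  obtain K where K: "\<forall>n. norm (norm (\<kappa> n)) \<le> K"
    using convergent_imp_Bseq[OF convergentI[OF k0]] unfolding Bseq_def by auto
  have bdd: "bdd_above ((\<lambda>m. norm (\<kappa> m)) ` A)" for A
    using K by (intro bdd_aboveI2[of _ _ K]) auto
  have s_ge: "norm (\<kappa> n) \<le> s n" for n unfolding s_def
    by (rule cSUP_upper[OF _ bdd]) auto
  have s_mono: "s (Suc n) \<le> s n" for n unfolding s_def
    by (rule cSUP_subset_mono) (auto intro: bdd)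
  have s_nn: "0 \<le> s n" for n using s_ge[of n] by (meson norm_ge_zero order_trans)
  have s_anti: "antimono s" using s_mono by (simp add: decseq_Suc_iff)
  have s0: "s \<longlonglongrightarrow> 0"
  proof (rule LIMSEQ_I)
    fix r :: real assume r: "r > 0"
    from LIMSEQ_D[OF k0, of "r/2"] r obtain N where N: "\<forall>m\<ge>N. norm (norm (\<kappa> m) - 0) < r/2" by auto
    have "norm (s n - 0) < r" if "n \<ge> N" for n
    proof -
      have "s n \<le> r/2" unfolding s_def using N that by (intro cSUP_least) (auto, meson order_trans less_imp_le)
      then show ?thesis using r s_nn[of n] by simp
    qed
    then show "\<exists>N. \<forall>n\<ge>N. norm (s n - 0) < r" by blast
  qed
  define w where "w = (\<lambda>n. min 1 (s n + inverse (real (Suc n))))"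
  have w_pos: "0 < w n" "w n \<le> 1" for n using s_nn[of n] by (auto simp: w_def intro!: add_nonneg_pos)
  have w_anti: "antimono w"
  proof -
    have "w (Suc n) \<le> w n" for n
    proof -
      have "inverse (real (Suc (Suc n))) \<le> inverse (real (Suc n))" by (simp add: field_simps)
      then show ?thesis using s_mono[of n] unfolding w_def by (intro min.mono add_mono) auto
    qed
    then show ?thesis by (simp add: decseq_Suc_iff)
  qed
  have w0: "w \<longlonglongrightarrow> 0"
  proof -
    have "(\<lambda>n. s n + inverse (real (Suc n))) \<longlonglongrightarrow> 0 + 0"
      by (intro tendsto_add s0 LIMSEQ_inverse_real_of_nat)
    then have "(\<lambda>n. min 1 (s n + inverse (real (Suc n)))) \<longlonglongrightarrow> min 1 (0 + 0)"
      by (intro tendsto_min tendsto_const)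
    then show ?thesis by (simp add: w_def)
  qed
  have ws: "weighting_seq w" unfolding weighting_seq_def using w_anti w_pos w0 by auto
  define C where "C = max 1 (s 0)"
  have C1: "1 \<le> C" by (simp add: C_def)
  have kC: "norm (\<kappa> n) \<le> C * w n" for n
  proof (cases "s n + inverse (real (Suc n)) \<le> 1")
    case True
    then have "w n = s n + inverse (real (Suc n))" by (simp add: w_def)
    then have "norm (\<kappa> n) \<le> w n" using s_ge[of n] by (simp add: add_increasing2)
    moreover have "1 * w n \<le> C * w n" using C1 w_pos[of n] by (intro mult_right_mono) auto
    ultimately show ?thesis by simp
  next
    case False
    then have "w n = 1" by (simp add: w_def)
    moreover have "s n \<le> s 0" using antimonoD[OF s_anti, of 0 n] by simp
    ultimately show ?thesis using s_ge[of n] by (simp add: C_def)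
  qed
  have key: "norm (H z' - H z) \<le> C * weighted_norm1 w (\<lambda>n. z' n - z n)"
    if zZ: "z \<in> Zs" and z'Z: "z' \<in> Zs" for z z'
  proof -
    have sz: "summable (\<lambda>n. norm (z n))" "summable (\<lambda>n. norm (z' n))"
      using l1 zZ z'Z by (auto simp: in_ell1_def)
    have le: "w n * norm (z' n - z n) \<le> norm (z' n) + norm (z n)" for n
    proof -
      have "w n * norm (z' n - z n) \<le> 1 * norm (z' n - z n)"
        using w_pos[of n] by (intro mult_right_mono) auto
      also have "\<dots> \<le> norm (z' n) + norm (z n)" by (simp add: norm_triangle_ineq4)
      finally show ?thesis .
    qed
    have smb: "summable (\<lambda>n. w n * norm (z' n - z n))"
      by (rule summable_comparison_test'[of "\<lambda>n. norm (z' n) + norm (z n)" 0])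
        (use le w_pos in \<open>auto intro!: summable_add sz simp: abs_mult less_imp_le\<close>)
    from cr zZ have t1: "(\<lambda>N. \<Sum>n\<le>N. blinfun_apply (\<kappa> n) (z n)) \<longlonglongrightarrow> H z"
      by (auto simp: convolution_rep_def)
    from cr z'Z have t2: "(\<lambda>N. \<Sum>n\<le>N. blinfun_apply (\<kappa> n) (z' n)) \<longlonglongrightarrow> H z'"
      by (auto simp: convolution_rep_def)
    have t: "(\<lambda>N. \<Sum>n\<le>N. blinfun_apply (\<kappa> n) (z' n - z n)) \<longlonglongrightarrow> H z' - H z"
      using tendsto_diff[OF t2 t1] by (simp add: blinfun.diff_right sum_subtractf)
    have bnd: "norm (\<Sum>n\<le>N. blinfun_apply (\<kappa> n) (z' n - z n)) \<le> C * weighted_norm1 w (\<lambda>n. z' n - z n)" for N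
    proof -
      have "norm (\<Sum>n\<le>N. blinfun_apply (\<kappa> n) (z' n - z n)) \<le> (\<Sum>n\<le>N. norm (blinfun_apply (\<kappa> n) (z' n - z n)))"
        by (rule norm_sum)
      also have "\<dots> \<le> (\<Sum>n\<le>N. C * (w n * norm (z' n - z n)))"
      proof (rule sum_mono)
        fix n
        have "norm (blinfun_apply (\<kappa> n) (z' n - z n)) \<le> norm (\<kappa> n) * norm (z' n - z n)"
          by (rule norm_blinfun)
        also have "\<dots> \<le> (C * w n) * norm (z' n - z n)" by (intro mult_right_mono kC) auto
        finally show "norm (blinfun_apply (\<kappa> n) (z' n - z n)) \<le> C * (w n * norm (z' n - z n))"
          by (simp add: mult.assoc)
      qed
      also have "\<dots> = C * (\<Sum>n\<le>N. w n * norm (z' n - z n))" by (simp add: sum_distrib_left)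
      also have "\<dots> \<le> C * (\<Sum>n. w n * norm (z' n - z n))"
        using C1 w_pos(1)[THEN less_imp_le] by (intro mult_left_mono sum_le_suminf[OF smb]) auto
      finally show ?thesis unfolding weighted_norm1_def .
    qed
    show ?thesis by (rule LIMSEQ_le_const2[OF tendsto_norm[OF t]]) (use bnd in auto)
  qed
  have cont: "\<forall>z\<in>Zs. \<forall>e>0. \<exists>d>0. \<forall>z'\<in>Zs. weighted_norm1 w (\<lambda>n. z' n - z n) < d \<longrightarrow> norm (H z' - H z) < e"
  proof (intro ballI allI impI)
    fix z :: "nat \<Rightarrow> 'z" and e :: real assume zZ: "z \<in> Zs" and e: "0 < e"
    show "\<exists>d>0. \<forall>z'\<in>Zs. weighted_norm1 w (\<lambda>n. z' n - z n) < d \<longrightarrow> norm (H z' - H z) < e"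
    proof (intro exI[of _ "e / C"] conjI ballI impI)
      show "0 < e / C" using e C1 by simp
      fix z' assume z'Z: "z' \<in> Zs" and lt: "weighted_norm1 w (\<lambda>n. z' n - z n) < e / C"
      have "norm (H z' - H z) \<le> C * weighted_norm1 w (\<lambda>n. z' n - z n)" by (rule key[OF zZ z'Z])
      also have "\<dots> < C * (e / C)" using lt C1 by (intro mult_strict_left_mono) auto
      also have "\<dots> = e" using C1 by simp
      finally show "norm (H z' - H z) < e" .
    qed
  qed
  show ?thesis unfolding FMP1_def using l1 ws cont by blast
qed

lemma FMP_imp_conv:
  fixes Zs :: "(nat \<Rightarrow> 'z::real_normed_vector) set"
    and H :: "(nat \<Rightarrow> 'z) \<Rightarrow> 'y::real_normed_vector"
  assumes sa: "standing_assumption Zs" and lf: "linear_functional Zs H" and F: "FMP1 Zs H"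
  shows "\<exists>\<kappa>. convolution_rep Zs H \<kappa> \<and> (\<lambda>n. norm (\<kappa> n)) \<longlonglongrightarrow> 0"
proof -
  from F obtain w where l1: "\<forall>z\<in>Zs. in_ell1 z" and ws: "weighting_seq w"
    and cont: "\<forall>z\<in>Zs. \<forall>e>0. \<exists>d>0. \<forall>z'\<in>Zs. weighted_norm1 w (\<lambda>n. z' n - z n) < d \<longrightarrow> norm (H z' - H z) < e"
    unfolding FMP1_def by blast
  from lf obtain L where Ladd: "\<forall>x\<in>seq_span Zs. \<forall>y\<in>seq_span Zs. L (\<lambda>n. x n + y n) = L x + L y"
    and Lsc: "\<forall>c. \<forall>x\<in>seq_span Zs. L (\<lambda>n. c *\<^sub>R x n) = c *\<^sub>R L x"
    and HL: "\<forall>z\<in>Zs. H z = L z"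
    unfolding linear_functional_def by blast
  from sa have dZ: "\<And>t z. norm z \<le> 1 \<Longrightarrow> delta_seq t z \<in> Zs"
    and trZ: "\<And>z J. z \<in> Zs \<Longrightarrow> (\<lambda>n. if n \<in> J then z n else 0) \<in> Zs"
    unfolding standing_assumption_def by blast+
  have wp: "0 < w n" "w n \<le> 1" for n using ws by (auto simp: weighting_seq_def)
  have w0: "w \<longlonglongrightarrow> 0" using ws by (auto simp: weighting_seq_def)
  have dspan: "delta_seq n x \<in> seq_span Zs" for n x
  proof -
    have eq: "delta_seq n x = (\<lambda>m. norm x *\<^sub>R delta_seq n (sgn x) m)"
      by (cases "x = 0") (auto simp: delta_seq_def fun_eq_iff sgn_div_norm)
    have "delta_seq n (sgn x) \<in> Zs" by (rule dZ) (simp add: norm_sgn)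
    then show ?thesis unfolding eq by (intro seq_span.span_scale seq_span.span_base)
  qed
  define k where "k n x = L (delta_seq n x)" for n x
  have kadd: "k n (a + b) = k n a + k n b" for n a b
  proof -
    have "delta_seq n (a + b) = (\<lambda>m. delta_seq n a m + delta_seq n b m)"
      by (auto simp: delta_seq_def fun_eq_iff)
    then show ?thesis using Ladd dspan by (simp add: k_def)
  qed
  have ksc: "k n (c *\<^sub>R a) = c *\<^sub>R k n a" for n c a
  proof -
    have "delta_seq n (c *\<^sub>R a) = (\<lambda>m. c *\<^sub>R delta_seq n a m)"
      by (auto simp: delta_seq_def fun_eq_iff)
    then show ?thesis using Lsc dspan by (simp add: k_def)
  qed
  have kH: "H (delta_seq n y) = k n y" if "norm y \<le> 1" for n y
    using HL dZ[OF that] by (simp add: k_def)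
  have z0eq: "delta_seq 0 (0::'z) = (\<lambda>n. 0)" by (simp add: delta_seq_def)
  have z0Z: "(\<lambda>n. 0::'z) \<in> Zs" using dZ[of 0 0] z0eq by simp
  have H0: "H (\<lambda>n. 0) = 0"
  proof -
    have "(\<lambda>n. 0::'z) \<in> seq_span Zs" by (rule seq_span.span_zero)
    then have "L (\<lambda>n. 0::'z) = 0" using Lsc[rule_format, where c=0 and x="\<lambda>n. 0::'z"] by simp
    then show ?thesis using HL z0Z by simp
  qed
  have wd: "weighted_norm1 w (\<lambda>m. delta_seq n y m - 0) = w n * norm y" for n y
  proof -
    have "(\<lambda>m. if m = n then w m * norm y else 0) sums (w n * norm y)" by (rule sums_single)
    moreover have "(\<lambda>m. w m * norm (delta_seq n y m - 0)) = (\<lambda>m. if m = n then w m * norm y else 0)"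
      by (auto simp: delta_seq_def fun_eq_iff)
    ultimately show ?thesis unfolding weighted_norm1_def by (simp add: sums_iff)
  qed
  have small: "\<exists>d>0. \<forall>n y. norm y \<le> 1 \<longrightarrow> w n * norm y < d \<longrightarrow> norm (k n y) < e" if e: "e > 0" for e
  proof -
    from cont[rule_format, OF z0Z e] obtain d where d: "d > 0"
      and dd: "\<forall>z'\<in>Zs. weighted_norm1 w (\<lambda>n. z' n - 0) < d \<longrightarrow> norm (H z' - H (\<lambda>n. 0)) < e"
      by blast
    have "norm (k n y) < e" if "norm y \<le> 1" "w n * norm y < d" for n y
      using dd[rule_format, OF dZ[OF that(1), of n]] wd[of n y] that kH[OF that(1), of n] H0 by simp
    with d show ?thesis by blast
  qed
  obtain d1 where d1: "d1 > 0" and sm1: "\<forall>n y. norm y \<le> 1 \<longrightarrow> w n * norm y < d1 \<longrightarrow> norm (k n y) < 1"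
    using small[of 1] by auto
  define m where "m = min 1 (d1 / 2)"
  have m: "0 < m" "m \<le> 1" "m < d1" using d1 by (auto simp: m_def)
  have kb: "norm (k n x) \<le> 1 / m * norm x" for n x
  proof (rule homog_bound[OF ksc m(1)])
    fix y :: 'z assume y: "norm y \<le> m"
    have "w n * norm y \<le> 1 * m" using wp[of n] y by (intro mult_mono) auto
    then show "norm (k n y) \<le> 1" using sm1[rule_format, of y n] y m by (simp add: less_imp_le)
  qed
  have bl: "bounded_linear (k n)" for n
    by (rule bounded_linear_intro[of _ "1 / m"]) (use kadd ksc kb in \<open>auto simp: mult.commute\<close>)
  define \<kappa> where "\<kappa> n = Blinfun (k n)" for n
  have ka: "blinfun_apply (\<kappa> n) = k n" for n by (simp add: \<kappa>_def bounded_linear_Blinfun_apply bl)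
  have k0: "(\<lambda>n. norm (\<kappa> n)) \<longlonglongrightarrow> 0"
  proof (rule LIMSEQ_I)
    fix r :: real assume r: "r > 0"
    then obtain d where d: "d > 0" and sd: "\<forall>n y. norm y \<le> 1 \<longrightarrow> w n * norm y < d \<longrightarrow> norm (k n y) < r / 2"
      using small[of "r/2"] by auto
    from LIMSEQ_D[OF w0 d] obtain N where N: "\<forall>n\<ge>N. norm (w n - 0) < d" by blast
    have "norm (norm (\<kappa> n) - 0) < r" if n: "n \<ge> N" for n
    proof -
      have wn: "w n < d" using N n wp[of n] by auto
      have "norm (k n x) \<le> (r/2) / 1 * norm x" for x
      proof (rule homog_bound[OF ksc])
        fix y :: 'z assume y: "norm y \<le> 1"
        have "w n * norm y \<le> w n * 1" using wp[of n] y by (intro mult_left_mono) auto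
        then have "w n * norm y < d" using wn by simp
        then show "norm (k n y) \<le> r / 2" using sd[rule_format, of y n] y by (simp add: less_imp_le)
      qed simp
      then have "norm (\<kappa> n) \<le> r / 2" using r by (intro norm_blinfun_bound) (auto simp: ka)
      then show ?thesis using r by simp
    qed
    then show "\<exists>N. \<forall>n\<ge>N. norm (norm (\<kappa> n) - 0) < r" by blast
  qed
  have cr: "convolution_rep Zs H \<kappa>" unfolding convolution_rep_def
  proof (intro ballI conjI)
    fix z assume zZ: "z \<in> Zs"
    have sz: "summable (\<lambda>n. norm (z n))" using l1 zZ by (auto simp: in_ell1_def)
    show "summable (\<lambda>n. norm (blinfun_apply (\<kappa> n) (z n)))"
      by (rule summable_comparison_test'[of "\<lambda>n. 1 / m * norm (z n)" 0])
        (use kb in \<open>auto intro!: summable_mult sz simp: ka\<close>)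
    define tr where "tr N = (\<lambda>n. if n \<in> {..N} then z n else 0)" for N
    have trZ': "tr N \<in> Zs" for N unfolding tr_def by (rule trZ[OF zZ])
    have psum: "L (tr N) = (\<Sum>n\<le>N. k n (z n))" for N
    proof (induction N)
      case 0
      have "tr 0 = delta_seq 0 (z 0)" by (auto simp: tr_def delta_seq_def fun_eq_iff)
      then show ?case by (simp add: k_def)
    next
      case (Suc N)
      have "tr (Suc N) = (\<lambda>n. tr N n + delta_seq (Suc N) (z (Suc N)) n)"
        by (auto simp: tr_def delta_seq_def fun_eq_iff)
      then have "L (tr (Suc N)) = L (tr N) + k (Suc N) (z (Suc N))"
        using Ladd seq_span.span_base[OF trZ'[of N]] dspan by (simp add: k_def)
      then show ?case using Suc by simp
    qed
    have ps: "(\<Sum>n\<le>N. blinfun_apply (\<kappa> n) (z n)) = H (tr N)" for N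
      using psum[of N] HL trZ'[of N] by (simp add: ka)
    have "(\<lambda>N. H (tr N)) \<longlonglongrightarrow> H z"
    proof (rule LIMSEQ_I)
      fix e :: real assume e: "e > 0"
      from cont[rule_format, OF zZ e] obtain d where d: "d > 0"
        and dd: "\<forall>z'\<in>Zs. weighted_norm1 w (\<lambda>n. z' n - z n) < d \<longrightarrow> norm (H z' - H z) < e" by blast
      define T where "T N = suminf (\<lambda>n. norm (z n)) - (\<Sum>n\<le>N. norm (z n))" for N
      have T0: "T \<longlonglongrightarrow> 0"
        using tendsto_diff[OF tendsto_const summable_LIMSEQ'[OF sz], of "suminf (\<lambda>n. norm (z n))"]
        by (simp add: T_def[abs_def])
      from LIMSEQ_D[OF T0 d] obtain N0 where N0: "\<forall>N\<ge>N0. norm (T N - 0) < d" by blast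
      have "norm (H (tr N) - H z) < e" if N: "N \<ge> N0" for N
      proof -
        define g where "g n = norm (z n) - (if n \<in> {..N} then norm (z n) else 0)" for n
        have sg1: "(\<lambda>n. if n \<in> {..N} then norm (z n) else 0) sums (\<Sum>n\<in>{..N}. norm (z n))"
          by (rule sums_If_finite_set) simp
        have sg: "g sums T N" unfolding g_def T_def
          by (intro sums_diff summable_sums[OF sz] sg1)
        have fle: "w n * norm (tr N n - z n) \<le> g n" for n
        proof (cases "n \<le> N")
          case True then show ?thesis by (simp add: tr_def g_def)
        next
          case False
          then have "w n * norm (tr N n - z n) = w n * norm (z n)" by (simp add: tr_def)
          also have "\<dots> \<le> 1 * norm (z n)" using wp[of n] by (intro mult_right_mono) auto
          finally show ?thesis using False by (simp add: g_def)
        qed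
        have fnn: "0 \<le> w n * norm (tr N n - z n)" for n using wp[of n] by simp
        have sf: "summable (\<lambda>n. w n * norm (tr N n - z n))"
          by (rule summable_comparison_test'[of g 0]) (use sg fle fnn in \<open>auto simp: sums_iff\<close>)
        have "weighted_norm1 w (\<lambda>n. tr N n - z n) \<le> T N"
          unfolding weighted_norm1_def using suminf_le[OF fle sf] sg by (simp add: sums_iff)
        also have "\<dots> < d" using N0 N by auto
        finally show ?thesis using dd trZ'[of N] by blast
      qed
      then show "\<exists>N0. \<forall>N\<ge>N0. norm (H (tr N) - H z) < e" by blast
    qed
    then show "(\<lambda>N. \<Sum>n\<le>N. blinfun_apply (\<kappa> n) (z n)) \<longlonglongrightarrow> H z" by (simp add: ps)
  qed
  show ?thesis using cr k0 by blast
qed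

theorem proposition3p5:
  fixes Zs :: "(nat \<Rightarrow> 'z::real_normed_vector) set"
    and H :: "(nat \<Rightarrow> 'z) \<Rightarrow> 'y::real_normed_vector"
  assumes "standing_assumption Zs"
    and "\<forall>z\<in>Zs. in_ell1 z"
    and "linear_functional Zs H"
  shows "FMP1 Zs H \<longleftrightarrow>
         (\<exists>\<kappa>. convolution_rep Zs H \<kappa> \<and> (\<lambda>n. norm (\<kappa> n)) \<longlonglongrightarrow> 0)"
  using FMP_imp_conv[OF assms(1) assms(3)] conv_imp_FMP[OF assms(2)] by blast

end
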